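(* Let $G$ be a group, $F$ a field of characteristic $0$, and let $R=M_n(F)$ carry the elementary $G$-grading induced by an $n$-tuple $(g_1,\dots,g_n)$ of pairwise distinct elements of $G$. Let $m=x_1x_2\cdots x_k$ be a multilinear graded monomial with $\deg x_1\cdot\deg x_2\cdots\deg x_k=1_G$ which is a graded identity of $R$. Then $m'=x_2\cdots x_k$ is also a graded identity of $R$ (and hence $m$ lies in the $T_G$-ideal generated by $m'$).
   Context: The elementary $G$-grading on $M_n(F)$ induced by $(g_1,\dots,g_n)\in G^n$ is $R_g=\mathrm{span}\{e_{pq}: g_p^{-1}g_q=g\}$. Graded polynomials live in the free $G$-graded algebra on variables each having a prescribed degree in $G$; a graded polynomial $f(x_1,\dots,x_r)$ is a graded identity of $R$ if it vanishes under every substitution $x_i\mapsto a_i\in R_{\deg x_i}$. A $T_G$-ideal is an ideal of the free $G$-graded algebra invariant under all degree-preserving endomorphisms. *)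

theory Defs
  imports "HOL-Analysis.Analysis"
begin

text \<open>Homogeneous component of degree h of the elementary G-grading on M_n(F)
  induced by the tuple g (group G written additively, possibly non-commutative):
  R_h = span of e_pq with g_p^{-1} g_q = h, i.e. matrices supported on such (p,q).\<close>
definition elem_hcomp :: "('n::finite \<Rightarrow> 'g::group_add) \<Rightarrow> 'g \<Rightarrow> ('a::zero^'n^'n) set" where
  "elem_hcomp g h = {A. \<forall>p q. A $ p $ q \<noteq> 0 \<longrightarrow> - g p + g q = h}"

definition mat_prod_list :: "('a::semiring_1^'n^'n) list \<Rightarrow> 'a^'n^'n" where
  "mat_prod_list As = foldr (\<lambda>A B. A ** B) As (mat 1)"

end

theory Submission
  imports Defs
begin

lemma hcomp_mult:
  fixes A B :: "('a::semiring_1)^'n::finite^'n"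
  assumes "A \<in> elem_hcomp g h" "B \<in> elem_hcomp g h'"
  shows "A ** B \<in> elem_hcomp g (h + h')"
  unfolding elem_hcomp_def
proof (intro CollectI allI impI)
  fix p q
  assume "(A ** B) $ p $ q \<noteq> 0"
  then have "(\<Sum>r\<in>UNIV. A $ p $ r * B $ r $ q) \<noteq> 0"
    by (simp add: matrix_matrix_mult_def)
  then obtain r where "A $ p $ r * B $ r $ q \<noteq> 0"
    by (meson sum.neutral)
  then have "A $ p $ r \<noteq> 0" "B $ r $ q \<noteq> 0" by auto
  with assms have "- g p + g r = h" "- g r + g q = h'"
    unfolding elem_hcomp_def by auto
  then show "- g p + g q = h + h'"
    by (auto simp: add.assoc[symmetric])
qed

lemma hcomp_one: "(mat 1 :: ('a::semiring_1)^'n::finite^'n) \<in> elem_hcomp g 0"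
  unfolding elem_hcomp_def by (auto simp: mat_def)

lemma hcomp_prod:
  fixes a :: "nat \<Rightarrow> ('a::semiring_1)^'n::finite^'n"
  assumes "\<forall>i\<in>set xs. a i \<in> elem_hcomp g (d i)"
  shows "mat_prod_list (map a xs) \<in> elem_hcomp g (sum_list (map d xs))"
  using assms
proof (induction xs)
  case Nil
  then show ?case by (simp add: mat_prod_list_def hcomp_one)
next
  case (Cons x xs)
  then have "mat_prod_list (map a xs) \<in> elem_hcomp g (sum_list (map d xs))" by simp
  moreover have "a x \<in> elem_hcomp g (d x)" using Cons.prems by simp
  ultimately show ?case
    using hcomp_mult by (fastforce simp: mat_prod_list_def)
qed

theorem mainTheorem3:
  fixes g :: "'n::finite \<Rightarrow> 'g::group_add"
    and d :: "nat \<Rightarrow> 'g"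
    and k :: nat
  assumes distinct: "inj g"
    and deg_one: "sum_list (map d [1..<k+1]) = 0"
    and m_identity: "\<forall>a :: nat \<Rightarrow> ('a::field_char_0)^'n^'n.
           (\<forall>i\<in>{1..k}. a i \<in> elem_hcomp g (d i)) \<longrightarrow> mat_prod_list (map a [1..<k+1]) = 0"
  shows "\<forall>a :: nat \<Rightarrow> 'a^'n^'n.
           (\<forall>i\<in>{2..k}. a i \<in> elem_hcomp g (d i)) \<longrightarrow> mat_prod_list (map a [2..<k+1]) = 0"
proof (intro allI impI)
  fix a :: "nat \<Rightarrow> 'a^'n^'n"
  assume ha: "\<forall>i\<in>{2..k}. a i \<in> elem_hcomp g (d i)"
  show "mat_prod_list (map a [2..<k+1]) = 0"
  proof (cases "k = 0")
    case True
    have "mat_prod_list (map (\<lambda>_. 0 :: 'a^'n^'n) [1..<k+1]) = 0"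
      using m_identity True by auto
    then have "(mat 1 :: 'a^'n^'n) = 0" using True by (simp add: mat_prod_list_def)
    then have "(mat 1 :: 'a^'n^'n) $ undefined $ undefined = 0" by simp
    then show ?thesis by (simp add: mat_def)
  next
    case False
    define P where "P = mat_prod_list (map a [2..<k+1])"
    define s where "s = sum_list (map d [2..<k+1])"
    have ups: "[1..<k+1] = 1 # [2..<k+1]" using False by (simp add: upt_conv_Cons numeral_2_eq_2)
    have hP: "P \<in> elem_hcomp g s" unfolding P_def s_def
      by (rule hcomp_prod) (use ha in auto)
    have ds: "d 1 + s = 0" using deg_one ups s_def by simp
    show ?thesis
    proof (rule ccontr)
      assume "mat_prod_list (map a [2..<k+1]) \<noteq> 0"
      then have "P \<noteq> 0" by (simp add: P_def)
      then obtain p where "P $ p \<noteq> 0"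
        using vec_eq_iff[of P 0] by auto
      then obtain q where pq: "P $ p $ q \<noteq> 0"
        using vec_eq_iff[of "P $ p" 0] by auto
      then have gpq: "- g p + g q = s" using hP unfolding elem_hcomp_def by auto
      define e :: "'a^'n^'n" where "e = (\<chi> i j. if i = q \<and> j = p then 1 else 0)"
      have d1: "d 1 = - s" using ds by (simp add: eq_neg_iff_add_eq_0)
      have "- g q + g p = - s" unfolding gpq[symmetric] by (simp add: minus_add)
      then have he: "e \<in> elem_hcomp g (d 1)" unfolding elem_hcomp_def e_def d1 by auto
      define a' where "a' = a(1 := e)"
      have "\<forall>i\<in>{1..k}. a' i \<in> elem_hcomp g (d i)"
        proof
        fix i assume "i \<in> {1..k}"
        then have "i = 1 \<or> i \<in> {2..k}" by auto
        then show "a' i \<in> elem_hcomp g (d i)" using ha he by (auto simp: a'_def)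
      qed
      then have "mat_prod_list (map a' [1..<k+1]) = 0" using m_identity by blast
      moreover have "map a' [2..<k+1] = map a [2..<k+1]" by (auto simp: a'_def)
      ultimately have "e ** P = 0" using ups by (simp add: mat_prod_list_def a'_def P_def)
      then have "(e ** P) $ q $ q = 0" by simp
      moreover have "(e ** P) $ q $ q = P $ p $ q"
        by (simp add: matrix_matrix_mult_def e_def if_distrib[of "\<lambda>x. x * _"] cong: if_cong)
      ultimately show False using pq by simp
    qed
  qed
qed

end
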